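(* Let $H=\sum_{\mathbf{j}\in V}h_{\mathbf{j}}$ be a Hamiltonian with frustration graph $G$, let $K_s$ be a simplicial clique in $G$, and for $\mathbf{j}\in K_s$ let $K_{\mathbf{j}}=\Gamma[\mathbf{j}]\setminus(K_s\setminus\{\mathbf{j}\})$, so that $\Gamma[\mathbf{j}]=K_s\cup K_{\mathbf{j}}$. Then for every integer $k\ge1$, \[ Q^{(k)}_G=Q^{(k)}_{G\setminus K_s}+\sum_{\mathbf{j}\in K_s}Q^{(k-1)}_{G\setminus K_{\mathbf{j}}}\,h_{\mathbf{j}} . \]
   Context: Setting: $V$ a finite set of distinct $n$-qubit Pauli strings, $H=\sum_{\mathbf{j}\in V}h_{\mathbf{j}}$ with $h_{\mathbf{j}}=b_{\mathbf{j}}\sigma^{\mathbf{j}}$, $b_{\mathbf{j}}\in\mathbb{R}\setminus\{0\}$; frustration graph $G$: edge iff terms anticommute. $\Gamma[\mathbf{j}]$ is the closed neighbourhood of $\mathbf{j}$. Simplicial clique: clique $K_s$ with $\Gamma(\mathbf{j})\setminus K_s$ a clique for every $\mathbf{j}\in K_s$. For an induced subgraph $G'$ of $G$ and $k\ge0$, the independent set charge is $Q^{(k)}_{G'}=\sum_{S}h_S$, summed over independent sets $S$ of $G'$ of size $k$, where $h_S=\prod_{\mathbf{j}\in S}h_{\mathbf{j}}$ (so $Q^{(0)}_{G'}=I$, and $Q^{(k)}_{G'}=0$ if $G'$ has no independent set of size $k$). $G\setminus U$ denotes the subgraph induced by $V\setminus U$. *)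

theory Defs
  imports Complex_Main "HOL-Library.Function_Algebras"
begin

text \<open>Matrices of size 2^n x 2^n over the complex numbers are represented as
functions nat => nat => complex (entries outside the range are 0).
Qubit t of a basis index i is the bit (i div 2^t) mod 2.\<close>

type_synonym cmat = "nat \<Rightarrow> nat \<Rightarrow> complex"

datatype pauli = PI | PX | PY | PZ

fun pmat :: "pauli \<Rightarrow> nat \<Rightarrow> nat \<Rightarrow> complex" where
  "pmat PI a c = (if a = c then 1 else 0)"
| "pmat PX a c = (if a \<noteq> c then 1 else 0)"
| "pmat PY a c = (if a = 0 \<and> c = 1 then - \<i> else if a = 1 \<and> c = 0 then \<i> else 0)"
| "pmat PZ a c = (if a = c then (if a = 0 then 1 else -1) else 0)"

definition mmul :: "nat \<Rightarrow> cmat \<Rightarrow> cmat \<Rightarrow> cmat" where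
  "mmul n A B = (\<lambda>i j. \<Sum>l<2^n. A i l * B l j)"

definition ident :: "nat \<Rightarrow> cmat" where
  "ident n = (\<lambda>i j. if i = j \<and> i < 2^n then 1 else 0)"

text \<open>The Pauli string sigma^p = tensor product of the single-qubit Paulis p!0,...,p!(n-1).\<close>
definition sigma :: "nat \<Rightarrow> pauli list \<Rightarrow> cmat" where
  "sigma n p = (\<lambda>i j. if i < 2^n \<and> j < 2^n
      then \<Prod>t<n. pmat (p ! t) (i div 2^t mod 2) (j div 2^t mod 2) else 0)"

definition hterm :: "nat \<Rightarrow> (pauli list \<Rightarrow> real) \<Rightarrow> pauli list \<Rightarrow> cmat" where
  "hterm n b p = (\<lambda>i j. complex_of_real (b p) * sigma n p i j)"

definition anticommute :: "nat \<Rightarrow> pauli list \<Rightarrow> pauli list \<Rightarrow> bool" where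
  "anticommute n p q \<longleftrightarrow> mmul n (sigma n p) (sigma n q) = - mmul n (sigma n q) (sigma n p)"

text \<open>Product h_S of the terms in S (in some enumeration order; for independent sets
the factors commute, so the order is irrelevant).\<close>
definition hprod :: "nat \<Rightarrow> (pauli list \<Rightarrow> real) \<Rightarrow> pauli list set \<Rightarrow> cmat" where
  "hprod n b S = foldr (mmul n) (map (hterm n b) (SOME xs. set xs = S \<and> distinct xs)) (ident n)"

definition indep_set :: "nat \<Rightarrow> pauli list set \<Rightarrow> pauli list set \<Rightarrow> bool" where
  "indep_set n U S \<longleftrightarrow> S \<subseteq> U \<and> (\<forall>p\<in>S. \<forall>q\<in>S. \<not> anticommute n p q)"

definition Qcharge :: "nat \<Rightarrow> (pauli list \<Rightarrow> real) \<Rightarrow> pauli list set \<Rightarrow> nat \<Rightarrow> cmat" where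
  "Qcharge n b U k = (\<Sum>S\<in>{S. indep_set n U S \<and> card S = k}. hprod n b S)"

definition is_clique :: "nat \<Rightarrow> pauli list set \<Rightarrow> pauli list set \<Rightarrow> bool" where
  "is_clique n V K \<longleftrightarrow> K \<subseteq> V \<and> (\<forall>p\<in>K. \<forall>q\<in>K. p \<noteq> q \<longrightarrow> anticommute n p q)"

definition open_nbhd :: "nat \<Rightarrow> pauli list set \<Rightarrow> pauli list \<Rightarrow> pauli list set" where
  "open_nbhd n V j = {q\<in>V. q \<noteq> j \<and> anticommute n j q}"

definition closed_nbhd :: "nat \<Rightarrow> pauli list set \<Rightarrow> pauli list \<Rightarrow> pauli list set" where
  "closed_nbhd n V j = insert j (open_nbhd n V j)"

definition simplicial_clique :: "nat \<Rightarrow> pauli list set \<Rightarrow> pauli list set \<Rightarrow> bool" where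
  "simplicial_clique n V K \<longleftrightarrow> is_clique n V K \<and>
     (\<forall>j\<in>K. is_clique n V (open_nbhd n V j - K))"

end

theory Submission
  imports Defs
begin

lemma fsum_apply: "(sum f A) x = sum (\<lambda>a. f a x) A"
  by (induction A rule: infinite_finite_induct) auto

lemma sum_double: "(\<Sum>l<2*m. g l) = (\<Sum>l<m. g (2*l) + g (2*l+1))" for g :: "nat \<Rightarrow> 'a::comm_monoid_add"
  by (induction m) (auto simp: sum.distrib add_ac)

lemma bitsum:
  fixes f :: "nat \<Rightarrow> nat \<Rightarrow> 'a::comm_semiring_1"
  shows "(\<Sum>l<2^n. \<Prod>t<n. f t (l div 2^t mod 2)) = (\<Prod>t<n. \<Sum>c<2. f t c)"
proof (induction n arbitrary: f)
  case 0 then show ?case by simp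
next
  case (Suc n)
  have e: "(2*l + c) div 2^(Suc t) mod 2 = l div 2^t mod 2" if "c < 2" for l c t :: nat
    using that by (simp add: div_mult2_eq)
  have "(\<Sum>l<2^Suc n. \<Prod>t<Suc n. f t (l div 2^t mod 2))
      = (\<Sum>l<2^n. (\<Prod>t<Suc n. f t ((2*l) div 2^t mod 2)) + (\<Prod>t<Suc n. f t ((2*l+1) div 2^t mod 2)))"
    by (simp add: sum_double)
  also have "\<dots> = (\<Sum>l<2^n. (f 0 0 + f 0 1) * (\<Prod>t<n. f (Suc t) (l div 2^t mod 2)))"
  proof (rule sum.cong[OF refl])
    fix l :: nat
    have a: "(2*l) div 2^(Suc t) mod 2 = l div 2^t mod 2" for t using e[of 0 l t] by simp
    have b: "(2*l+1) div 2^(Suc t) mod 2 = l div 2^t mod 2" for t using e[of 1 l t] by simp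
    show "(\<Prod>t<Suc n. f t ((2*l) div 2^t mod 2)) + (\<Prod>t<Suc n. f t ((2*l+1) div 2^t mod 2))
       = (f 0 0 + f 0 1) * (\<Prod>t<n. f (Suc t) (l div 2^t mod 2))"
    proof -
      have c0: "(2*l) div 2^0 mod 2 = 0" by simp
      have c1: "(2*l+1) div 2^0 mod 2 = 1" by simp
      show ?thesis unfolding prod.lessThan_Suc_shift a b c0 c1 by (simp add: distrib_right)
    qed
  qed
  also have "\<dots> = (f 0 0 + f 0 1) * (\<Prod>t<n. \<Sum>c<2. f (Suc t) c)"
    by (simp add: sum_distrib_left[symmetric] Suc.IH[of "\<lambda>t. f (Suc t)"])
  also have "\<dots> = (\<Prod>t<Suc n. \<Sum>c<2. f t c)"
    unfolding prod.lessThan_Suc_shift by (simp add: numeral_2_eq_2)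
  finally show ?case .
qed


definition m2 :: "pauli \<Rightarrow> pauli \<Rightarrow> nat \<Rightarrow> nat \<Rightarrow> complex" where
  "m2 a c i j = (\<Sum>l<2. pmat a i l * pmat c l j)"

definition eps :: "pauli \<Rightarrow> pauli \<Rightarrow> complex" where
  "eps a c = (if a = PI \<or> c = PI \<or> a = c then 1 else -1)"

lemma m2_comm: "i < 2 \<Longrightarrow> j < 2 \<Longrightarrow> m2 a c i j = eps a c * m2 c a i j"
proof -
  assume "i < 2" "j < 2"
  then have "i = 0 \<or> i = 1" "j = 0 \<or> j = 1" by auto
  moreover have s: "(\<Sum>l<2. g l) = g 0 + g 1" for g :: "nat \<Rightarrow> complex"
    by (simp add: numeral_2_eq_2)
  ultimately show ?thesis
    unfolding m2_def s by (cases a; cases c; elim disjE; simp add: eps_def)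
qed

lemma mmul_sigma:
  "mmul n (sigma n p) (sigma n q) i j =
    (if i < 2^n \<and> j < 2^n then \<Prod>t<n. m2 (p!t) (q!t) (i div 2^t mod 2) (j div 2^t mod 2) else 0)"
proof (cases "i < 2^n \<and> j < 2^n")
  case True
  have "mmul n (sigma n p) (sigma n q) i j = (\<Sum>l<2^n. \<Prod>t<n. pmat (p!t) (i div 2^t mod 2) (l div 2^t mod 2) * pmat (q!t) (l div 2^t mod 2) (j div 2^t mod 2))"
    using True by (simp add: mmul_def sigma_def prod.distrib)
  also have "\<dots> = (\<Prod>t<n. m2 (p!t) (q!t) (i div 2^t mod 2) (j div 2^t mod 2))"
    by (subst bitsum) (simp add: m2_def)
  finally show ?thesis using True by simp
qed (auto simp: mmul_def sigma_def)

lemma prod_pm1: "(\<Prod>t<(n::nat). eps (f t) (g t)) = 1 \<or> (\<Prod>t<n. eps (f t) (g t)) = -1"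
  by (induction n) (auto simp: eps_def)

lemma mmul_sigma_sign:
  "mmul n (sigma n p) (sigma n q) = (\<lambda>i j. (\<Prod>t<n. eps (p!t) (q!t)) * mmul n (sigma n q) (sigma n p) i j)"
proof (intro ext)
  fix i j
  show "mmul n (sigma n p) (sigma n q) i j = (\<Prod>t<n. eps (p!t) (q!t)) * mmul n (sigma n q) (sigma n p) i j"
    unfolding mmul_sigma by (auto simp: prod.distrib[symmetric] intro!: prod.cong m2_comm)
qed

lemma sigma_comm:
  assumes "\<not> anticommute n p q"
  shows "mmul n (sigma n p) (sigma n q) = mmul n (sigma n q) (sigma n p)"
proof -
  from prod_pm1 consider "(\<Prod>t<n. eps (p!t) (q!t)) = 1" | "(\<Prod>t<n. eps (p!t) (q!t)) = -1" by blast
  then show ?thesis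
  proof cases
    case 1 then show ?thesis by (subst mmul_sigma_sign) simp
  next
    case 2
    then have "anticommute n p q" unfolding anticommute_def
      by (subst mmul_sigma_sign) (auto simp: fun_Compl_def)
    with assms show ?thesis by simp
  qed
qed

definition supp :: "nat \<Rightarrow> cmat \<Rightarrow> bool" where
  "supp n A \<longleftrightarrow> (\<forall>i j. (2^n \<le> i \<or> 2^n \<le> j) \<longrightarrow> A i j = 0)"

lemma mmul_assoc: "mmul n (mmul n A B) C = mmul n A (mmul n B C)"
  unfolding mmul_def
  by (auto simp: sum_distrib_left sum_distrib_right mult.assoc intro!: ext sum.swap)

lemma supp_mmul: "supp n A \<Longrightarrow> supp n B \<Longrightarrow> supp n (mmul n A B)"
  unfolding supp_def mmul_def by auto

lemma supp_hterm: "supp n (hterm n b p)"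
  unfolding supp_def hterm_def sigma_def by auto

lemma supp_ident: "supp n (ident n)"
  unfolding supp_def ident_def by auto

lemma mmul_ident_left: "supp n A \<Longrightarrow> mmul n (ident n) A = A"
proof (intro ext)
  fix i j assume s: "supp n A"
  have "mmul n (ident n) A i j = (\<Sum>l<2^n. if l = i then A i j else 0)"
    unfolding mmul_def ident_def by (rule sum.cong) auto
  also have "\<dots> = A i j" using s by (auto simp: supp_def)
  finally show "mmul n (ident n) A i j = A i j" .
qed

lemma mmul_ident_right: "supp n A \<Longrightarrow> mmul n A (ident n) = A"
proof (intro ext)
  fix i j assume s: "supp n A"
  have "mmul n A (ident n) i j = (\<Sum>l<2^n. if l = j then A i j else 0)"
    unfolding mmul_def ident_def by (rule sum.cong) auto
  also have "\<dots> = A i j" using s by (auto simp: supp_def)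
  finally show "mmul n A (ident n) i j = A i j" .
qed

lemma mmul_sum_left: "mmul n (\<Sum>s\<in>S. A s) B = (\<Sum>s\<in>S. mmul n (A s) B)"
  unfolding mmul_def by (auto simp: fsum_apply sum_distrib_right intro!: ext sum.swap)

lemma mmul_neg_left: "mmul n (- A) B = - mmul n A B"
  unfolding mmul_def by (auto simp: sum_negf intro!: ext)

lemma mmul_hterm: "mmul n (hterm n b p) (hterm n b q) = (\<lambda>i j. complex_of_real (b p * b q) * mmul n (sigma n p) (sigma n q) i j)"
  unfolding mmul_def hterm_def by (auto simp: sum_distrib_left mult_ac intro!: ext)

lemma hterm_comm: assumes "\<not> anticommute n p q" shows "mmul n (hterm n b p) (hterm n b q) = mmul n (hterm n b q) (hterm n b p)"
  unfolding mmul_hterm by (simp add: sigma_comm[OF assms] mult.commute)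

lemma hterm_anti: "anticommute n p q \<Longrightarrow> mmul n (hterm n b p) (hterm n b q) = - mmul n (hterm n b q) (hterm n b p)"
  unfolding mmul_hterm anticommute_def by (auto simp: mult.commute intro!: ext)

lemma anticommute_sym: "anticommute n p q \<Longrightarrow> anticommute n q p"
  unfolding anticommute_def by (metis minus_minus)

definition P :: "nat \<Rightarrow> (pauli list \<Rightarrow> real) \<Rightarrow> pauli list list \<Rightarrow> cmat" where
  "P n b xs = foldr (mmul n) (map (hterm n b) xs) (ident n)"

lemma supp_foldr: "supp n Z \<Longrightarrow> supp n (foldr (mmul n) (map (hterm n b) xs) Z)"
  by (induction xs) (auto simp: supp_mmul supp_hterm)

lemma supp_P: "supp n (P n b xs)"
  unfolding P_def by (simp add: supp_foldr supp_ident)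

lemma foldr_P: "supp n Z \<Longrightarrow> foldr (mmul n) (map (hterm n b) xs) Z = mmul n (P n b xs) Z"
  unfolding P_def
  by (induction xs) (auto simp: mmul_ident_left mmul_assoc)

lemma P_append: "P n b (xs @ ys) = mmul n (P n b xs) (P n b ys)"
proof -
  have "P n b (xs@ys) = foldr (mmul n) (map (hterm n b) xs) (P n b ys)" by (simp add: P_def)
  also have "\<dots> = mmul n (P n b xs) (P n b ys)" by (rule foldr_P[OF supp_P])
  finally show ?thesis .
qed

lemma P_single: "P n b [x] = hterm n b x"
  by (simp add: P_def mmul_ident_right supp_hterm)

lemma P_Cons: "P n b (x # xs) = mmul n (hterm n b x) (P n b xs)"
  by (simp add: P_def)

lemma P_comm:
  assumes "\<forall>y\<in>set ys. \<not> anticommute n x y"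
  shows "mmul n (hterm n b x) (P n b ys) = mmul n (P n b ys) (hterm n b x)"
  using assms
proof (induction ys)
  case Nil then show ?case by (simp add: P_def mmul_ident_left mmul_ident_right supp_hterm)
next
  case (Cons y ys)
  have "mmul n (hterm n b x) (P n b (y # ys)) = mmul n (mmul n (hterm n b x) (hterm n b y)) (P n b ys)"
    by (simp add: P_Cons mmul_assoc)
  also have "\<dots> = mmul n (mmul n (hterm n b y) (hterm n b x)) (P n b ys)"
    using Cons.prems hterm_comm[of n x y b] by simp
  also have "\<dots> = mmul n (hterm n b y) (mmul n (hterm n b x) (P n b ys))"
    by (simp add: mmul_assoc)
  also have "\<dots> = mmul n (P n b (y # ys)) (hterm n b x)"
    using Cons by (simp add: P_Cons mmul_assoc)
  finally show ?case .
qed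

lemma P_perm:
  assumes "distinct xs" "distinct ys" "set xs = set ys"
    and "\<forall>p\<in>set xs. \<forall>q\<in>set xs. \<not> anticommute n p q"
  shows "P n b xs = P n b ys"
  using assms
proof (induction xs arbitrary: ys)
  case Nil then show ?case by simp
next
  case (Cons x xs)
  from Cons.prems have "x \<in> set ys" by auto
  then obtain ys1 ys2 where ys: "ys = ys1 @ x # ys2" by (meson split_list)
  have "P n b ys = mmul n (P n b ys1) (mmul n (hterm n b x) (P n b ys2))"
    by (simp add: ys P_append P_Cons)
  also have "\<dots> = mmul n (hterm n b x) (P n b (ys1 @ ys2))"
  proof -
    have c: "mmul n (hterm n b x) (P n b ys1) = mmul n (P n b ys1) (hterm n b x)"
      using Cons.prems unfolding ys by (intro P_comm) auto
    show ?thesis unfolding P_append mmul_assoc[symmetric] c ..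
  qed
  also have "P n b (ys1 @ ys2) = P n b xs"
  proof -
    have se: "set xs = set ys1 \<union> set ys2" using Cons.prems unfolding ys by auto
    show ?thesis using Cons.prems unfolding ys by (intro Cons.IH[symmetric]) (auto simp: se)
  qed
  finally show ?case by (simp add: P_Cons)
qed

lemma hprod_P:
  assumes "finite S" "distinct xs" "set xs = S" "\<forall>p\<in>S. \<forall>q\<in>S. \<not> anticommute n p q"
  shows "hprod n b S = P n b xs"
proof -
  let ?ys = "SOME xs. set xs = S \<and> distinct xs"
  have "set ?ys = S \<and> distinct ?ys"
    by (rule someI_ex) (use finite_distinct_list[OF assms(1)] in auto)
  then show ?thesis unfolding hprod_def P_def[symmetric]
    using assms by (intro P_perm) auto
qed

lemma hprod_insert:
  assumes "finite S" "j \<notin> S" "\<forall>p\<in>insert j S. \<forall>q\<in>insert j S. \<not> anticommute n p q"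
  shows "hprod n b (insert j S) = mmul n (hprod n b S) (hterm n b j)"
proof -
  obtain xs where xs: "set xs = S" "distinct xs" using finite_distinct_list[OF assms(1)] by auto
  have "hprod n b (insert j S) = P n b (xs @ [j])"
    using assms xs by (intro hprod_P) auto
  also have "\<dots> = mmul n (hprod n b S) (hterm n b j)"
    using assms xs by (simp add: P_append P_single hprod_P)
  finally show ?thesis .
qed

lemma self_not_anti: "\<not> anticommute n p p"
proof
  assume a: "anticommute n p p"
  have pm: "m2 a a 0 0 = 1" for a by (cases a) (simp_all add: m2_def numeral_2_eq_2)
  have "mmul n (sigma n p) (sigma n p) 0 0 = 1"
    unfolding mmul_sigma by (auto intro!: prod.neutral simp: pm)
  moreover have "mmul n (sigma n p) (sigma n p) 0 0 = - mmul n (sigma n p) (sigma n p) 0 0"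
    using a unfolding anticommute_def by (metis uminus_apply)
  ultimately show False by simp
qed

lemma mmul_add_left: "mmul n (A + B) C = mmul n A C + mmul n B C"
  unfolding mmul_def by (auto simp: distrib_right sum.distrib intro!: ext)

lemma mmul_neg_right: "mmul n A (- B) = - mmul n A B"
  unfolding mmul_def by (auto simp: sum_negf intro!: ext)

lemma mmul_zero_left: "mmul n 0 B = 0"
  unfolding mmul_def by (auto intro!: ext)

definition Iset :: "nat \<Rightarrow> pauli list set \<Rightarrow> nat \<Rightarrow> pauli list set set" where
  "Iset n U k = {S. indep_set n U S \<and> card S = k}"

lemma finite_Iset: "finite U \<Longrightarrow> finite (Iset n U k)"
  by (rule finite_subset[of _ "Pow U"]) (auto simp: Iset_def indep_set_def)

lemma gen_ins:
  assumes U: "finite U" "c \<in> U"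
  shows "(\<Sum>S\<in>{S\<in>Iset n U (Suc m). c \<in> S}. hprod n b S)
       = mmul n (Qcharge n b (U - insert c {q. anticommute n c q}) m) (hterm n b c)"
proof -
  let ?U' = "U - insert c {q. anticommute n c q}"
  have eq: "{S\<in>Iset n U (Suc m). c \<in> S} = insert c ` Iset n ?U' m"
  proof (rule set_eqI, rule iffI)
    fix S assume S: "S \<in> {S\<in>Iset n U (Suc m). c \<in> S}"
    then have fS: "finite S" using U by (auto simp: Iset_def indep_set_def intro: finite_subset)
    have "S - {c} \<in> Iset n ?U' m"
      using S fS by (auto simp: Iset_def indep_set_def)
    moreover have "S = insert c (S - {c})" using S by auto
    ultimately show "S \<in> insert c ` Iset n ?U' m" by blast
  next
    fix S assume "S \<in> insert c ` Iset n ?U' m"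
    then obtain T where T: "T \<in> Iset n ?U' m" "S = insert c T" by blast
    then have fT: "finite T" using U by (auto simp: Iset_def indep_set_def intro: finite_subset)
    have "c \<notin> T" using T by (auto simp: Iset_def indep_set_def)
    then show "S \<in> {S\<in>Iset n U (Suc m). c \<in> S}"
      using T fT U self_not_anti[of n c]
      by (auto simp: Iset_def indep_set_def dest: anticommute_sym)
  qed
  have inj: "inj_on (insert c) (Iset n ?U' m)"
  proof (rule inj_onI)
    fix x y assume "x \<in> Iset n ?U' m" "y \<in> Iset n ?U' m" "insert c x = insert c y"
    moreover have "c \<notin> x" "c \<notin> y" using calculation by (auto simp: Iset_def indep_set_def)
    ultimately show "x = y" by (metis Diff_insert_absorb)
  qed
  have "(\<Sum>S\<in>{S\<in>Iset n U (Suc m). c \<in> S}. hprod n b S) = (\<Sum>T\<in>Iset n ?U' m. hprod n b (insert c T))"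
    unfolding eq by (rule sum.reindex[OF inj, unfolded comp_def])
  also have "\<dots> = (\<Sum>T\<in>Iset n ?U' m. mmul n (hprod n b T) (hterm n b c))"
  proof (rule sum.cong[OF refl])
    fix T assume T: "T \<in> Iset n ?U' m"
    then have fT: "finite T" using U by (auto simp: Iset_def indep_set_def intro: finite_subset)
    show "hprod n b (insert c T) = mmul n (hprod n b T) (hterm n b c)"
      using T fT self_not_anti[of n c]
      by (intro hprod_insert) (auto simp: Iset_def indep_set_def dest: anticommute_sym)
  qed
  also have "\<dots> = mmul n (Qcharge n b ?U' m) (hterm n b c)"
    unfolding Qcharge_def Iset_def[symmetric] by (simp add: mmul_sum_left)
  finally show ?thesis .
qed

lemma gen_split:
  assumes U: "finite U" "C \<subseteq> U" and cl: "\<forall>p\<in>C. \<forall>q\<in>C. p \<noteq> q \<longrightarrow> anticommute n p q"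
  shows "Qcharge n b U k = Qcharge n b (U - C) k + (\<Sum>c\<in>C. \<Sum>S\<in>{S\<in>Iset n U k. c \<in> S}. hprod n b S)"
proof -
  have fC: "finite C" using U finite_subset by blast
  have eq: "Iset n U k = Iset n (U - C) k \<union> (\<Union>c\<in>C. {S\<in>Iset n U k. c \<in> S})"
  proof
    show "Iset n U k \<subseteq> Iset n (U - C) k \<union> (\<Union>c\<in>C. {S\<in>Iset n U k. c \<in> S})"
    proof
      fix S assume S: "S \<in> Iset n U k"
      show "S \<in> Iset n (U - C) k \<union> (\<Union>c\<in>C. {S\<in>Iset n U k. c \<in> S})"
      proof (cases "S \<inter> C = {}")
        case True then show ?thesis using S unfolding Iset_def indep_set_def by blast
      next
        case False then show ?thesis using S by blast
      qed
    qed
    show "Iset n (U - C) k \<union> (\<Union>c\<in>C. {S\<in>Iset n U k. c \<in> S}) \<subseteq> Iset n U k"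
      unfolding Iset_def indep_set_def by blast
  qed
  have d1: "Iset n (U - C) k \<inter> (\<Union>c\<in>C. {S\<in>Iset n U k. c \<in> S}) = {}"
    unfolding Iset_def indep_set_def by blast
  have d2: "\<forall>c\<in>C. \<forall>c'\<in>C. c \<noteq> c' \<longrightarrow> {S\<in>Iset n U k. c \<in> S} \<inter> {S\<in>Iset n U k. c' \<in> S} = {}"
  proof (intro ballI impI)
    fix c c' assume cc: "c \<in> C" "c' \<in> C" "c \<noteq> c'"
    then have "anticommute n c c'" using cl by blast
    then show "{S\<in>Iset n U k. c \<in> S} \<inter> {S\<in>Iset n U k. c' \<in> S} = {}"
      unfolding Iset_def indep_set_def by blast
  qed
  have f: "finite (Iset n U k)" using finite_Iset U by blast
  have "Qcharge n b U k = (\<Sum>S\<in>Iset n U k. hprod n b S)" by (simp add: Qcharge_def Iset_def)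
  also have "\<dots> = (\<Sum>S\<in>Iset n (U - C) k. hprod n b S) + (\<Sum>S\<in>(\<Union>c\<in>C. {S\<in>Iset n U k. c \<in> S}). hprod n b S)"
    apply (subst eq)
    apply (rule sum.union_disjoint)
    using U d1 f fC by (auto simp: finite_Iset)
  also have "(\<Sum>S\<in>(\<Union>c\<in>C. {S\<in>Iset n U k. c \<in> S}). hprod n b S) = (\<Sum>c\<in>C. \<Sum>S\<in>{S\<in>Iset n U k. c \<in> S}. hprod n b S)"
    using fC f d2 by (intro sum.UNION_disjoint) auto
  finally show ?thesis by (simp only: Qcharge_def Iset_def)
qed

lemma neg_eq: "(z::complex) = - z \<Longrightarrow> z = 0" by simp

lemma antisym_sum:
  fixes f :: "'a \<Rightarrow> 'a \<Rightarrow> cmat"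
  assumes fK: "finite K" and as: "\<forall>j\<in>K. \<forall>j'\<in>K. j \<noteq> j' \<longrightarrow> f j' j = - f j j'"
  shows "(\<Sum>j\<in>K. \<Sum>j'\<in>K - {j}. f j j') = 0"
proof -
  let ?S = "(\<Sum>j\<in>K. \<Sum>j'\<in>K - {j}. f j j')"
  have r: "K - {j} = {j'. j' \<in> K \<and> j \<noteq> j'}" for j by auto
  have r2: "K - {j'} = {j. j \<in> K \<and> j \<noteq> j'}" for j' by auto
  have "?S = (\<Sum>j\<in>K. \<Sum>j'\<in>{j'. j' \<in> K \<and> j \<noteq> j'}. f j j')"
    by (simp only: r)
  also have "\<dots> = (\<Sum>j'\<in>K. \<Sum>j\<in>{j. j \<in> K \<and> j \<noteq> j'}. f j j')"
    by (rule sum.swap_restrict[OF fK fK])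
  also have "\<dots> = (\<Sum>j'\<in>K. \<Sum>j\<in>K - {j'}. - f j' j)"
  proof (rule sum.cong[OF refl])
    fix j' assume j': "j' \<in> K"
    show "(\<Sum>j\<in>{j. j \<in> K \<and> j \<noteq> j'}. f j j') = (\<Sum>j\<in>K - {j'}. - f j' j)"
      unfolding r2[symmetric] using as j' by (intro sum.cong[OF refl]) auto
  qed
  also have "\<dots> = - ?S"
    by (simp only: sum_negf)
  finally have e: "?S = - ?S" .
  show ?thesis
  proof (intro ext)
    fix i j
    from fun_cong[OF fun_cong[OF e, of i], of j] have h: "?S i j = - ?S i j" unfolding uminus_apply .
    show "?S i j = 0 i j" by (simp only: zero_fun_apply neg_eq[OF h])
  qed
qed

theorem lemma18:
  fixes n :: nat and V K :: "pauli list set" and b :: "pauli list \<Rightarrow> real" and k :: nat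
  assumes "finite V"
    and "\<forall>p\<in>V. length p = n"
    and "\<forall>p\<in>V. b p \<noteq> 0"
    and "simplicial_clique n V K"
    and "k \<ge> 1"
  shows "Qcharge n b V k =
           Qcharge n b (V - K) k
           + (\<Sum>j\<in>K. mmul n (Qcharge n b (V - (closed_nbhd n V j - (K - {j}))) (k - 1)) (hterm n b j))"
proof -
  have fV: "finite V" by fact
  from assms(4) have KV: "K \<subseteq> V" and cl: "\<forall>p\<in>K. \<forall>q\<in>K. p \<noteq> q \<longrightarrow> anticommute n p q"
    by (auto simp: simplicial_clique_def is_clique_def)
  have fK: "finite K" using KV fV finite_subset by blast
  obtain m where k: "k = Suc m" using assms(5) by (cases k) auto
  have km: "k - 1 = m" using k by simp
  have s1: "Qcharge n b V k = Qcharge n b (V - K) k + (\<Sum>c\<in>K. \<Sum>S\<in>{S\<in>Iset n V k. c \<in> S}. hprod n b S)"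
    by (rule gen_split[OF fV KV cl])
  have s2: "(\<Sum>S\<in>{S\<in>Iset n V k. c \<in> S}. hprod n b S)
     = mmul n (Qcharge n b (V - insert c {q. anticommute n c q}) m) (hterm n b c)" if "c \<in> K" for c
    unfolding k using gen_ins[OF fV, where c=c and m=m and n=n and b=b] that KV by blast
  have s3: "mmul n (Qcharge n b (V - (closed_nbhd n V j - (K - {j}))) m) (hterm n b j)
     = mmul n (Qcharge n b (V - insert j {q. anticommute n j q}) m) (hterm n b j)
       + (\<Sum>j'\<in>K - {j}. mmul n (\<Sum>S\<in>{S\<in>Iset n (V - (closed_nbhd n V j - (K - {j}))) m. j' \<in> S}. hprod n b S) (hterm n b j))"
    if j: "j \<in> K" for j
  proof -
    have fU: "finite (V - (closed_nbhd n V j - (K - {j})))" using fV by auto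
    have sub: "K - {j} \<subseteq> V - (closed_nbhd n V j - (K - {j}))" using KV by auto
    have cl': "\<forall>p\<in>K - {j}. \<forall>q\<in>K - {j}. p \<noteq> q \<longrightarrow> anticommute n p q" using cl by blast
    have eqs: "V - (closed_nbhd n V j - (K - {j})) - (K - {j}) = V - insert j {q. anticommute n j q}"
      using KV cl j by (auto simp: closed_nbhd_def open_nbhd_def)
    have "Qcharge n b (V - (closed_nbhd n V j - (K - {j}))) m
       = Qcharge n b (V - insert j {q. anticommute n j q}) m
         + (\<Sum>j'\<in>K - {j}. \<Sum>S\<in>{S\<in>Iset n (V - (closed_nbhd n V j - (K - {j}))) m. j' \<in> S}. hprod n b S)"
      using gen_split[OF fU sub cl', where b=b and k=m] unfolding eqs .
    then show ?thesis by (simp add: mmul_add_left mmul_sum_left)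
  qed
  have s4: "(\<Sum>j\<in>K. \<Sum>j'\<in>K - {j}. mmul n (\<Sum>S\<in>{S\<in>Iset n (V - (closed_nbhd n V j - (K - {j}))) m. j' \<in> S}. hprod n b S) (hterm n b j)) = 0"
  proof (cases m)
    case 0
    have e: "{S\<in>Iset n (V - (closed_nbhd n V j - (K - {j}))) 0. j' \<in> S} = {}" for j j'
    proof -
      have "S = {}" if "S \<in> Iset n (V - (closed_nbhd n V j - (K - {j}))) 0" for S
      proof -
        from that have "S \<subseteq> V" "card S = 0" by (auto simp: Iset_def indep_set_def)
        then show "S = {}" using fV finite_subset card_0_eq by metis
      qed
      then show ?thesis by auto
    qed
    show ?thesis unfolding 0 e by (simp add: mmul_zero_left)
  next
    case (Suc m')
    define W where "W j j' = V - insert j {q. anticommute n j q} - insert j' {q. anticommute n j' q}" for j j'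
    have t: "(\<Sum>S\<in>{S\<in>Iset n (V - (closed_nbhd n V j - (K - {j}))) m. j' \<in> S}. hprod n b S)
       = mmul n (Qcharge n b (W j j') m') (hterm n b j')" if jj: "j \<in> K" "j' \<in> K - {j}" for j j'
    proof -
      have fU: "finite (V - (closed_nbhd n V j - (K - {j})))" using fV by auto
      have j'U: "j' \<in> V - (closed_nbhd n V j - (K - {j}))" using KV jj by auto
      have eqW: "V - (closed_nbhd n V j - (K - {j})) - insert j' {q. anticommute n j' q} = W j j'"
        using KV cl jj unfolding W_def closed_nbhd_def open_nbhd_def by auto
      show ?thesis using gen_ins[OF fU j'U, where m=m' and n=n and b=b] unfolding Suc eqW .
    qed
    define f where "f j j' = mmul n (mmul n (Qcharge n b (W j j') m') (hterm n b j')) (hterm n b j)" for j j'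
    have "(\<Sum>j\<in>K. \<Sum>j'\<in>K - {j}. mmul n (\<Sum>S\<in>{S\<in>Iset n (V - (closed_nbhd n V j - (K - {j}))) m. j' \<in> S}. hprod n b S) (hterm n b j))
       = (\<Sum>j\<in>K. \<Sum>j'\<in>K - {j}. f j j')"
      by (intro sum.cong refl) (simp add: t f_def)
    also have "\<dots> = 0"
    proof (rule antisym_sum[OF fK], intro ballI impI)
      fix j j' assume jj: "j \<in> K" "j' \<in> K" "j \<noteq> j'"
      have Ws: "W j' j = W j j'" unfolding W_def by auto
      have a: "anticommute n j j'" using cl jj by blast
      show "f j' j = - f j j'"
        unfolding f_def Ws mmul_assoc hterm_anti[OF a] mmul_neg_right ..
    qed
    finally show ?thesis .
  qed
  have "Qcharge n b V k = Qcharge n b (V - K) k + (\<Sum>j\<in>K. mmul n (Qcharge n b (V - insert j {q. anticommute n j q}) m) (hterm n b j))"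
    using s1 s2 by simp
  also have "(\<Sum>j\<in>K. mmul n (Qcharge n b (V - insert j {q. anticommute n j q}) m) (hterm n b j))
     = (\<Sum>j\<in>K. mmul n (Qcharge n b (V - (closed_nbhd n V j - (K - {j}))) m) (hterm n b j))"
    using s3 s4 by (simp add: sum.distrib)
  finally show ?thesis unfolding km .
qed

end
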